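(* Let $m\ge 2$ and let $A=(a_{ij})_{i,j=1}^m$ and $B=(b_{ij})_{i,j=1}^m$ be real matrices with $0\le a_{ij},b_{ij}\le 1$ for all $i,j$. Assume $\det(A)=\det(B)=0$ and $AB^T=\mathbf{1}$, where $\mathbf{1}$ is the $m\times m$ matrix all of whose entries are $1$, and assume that neither $A$ nor $B$ has all of its rows identical. Let $V:S^{m-1}\to S^{m-1}$ be the operator $$(V(x))_k=\Big(\sum_{i=1}^m a_{ik}x_i\Big)\Big(\sum_{j=1}^m b_{jk}x_j\Big),\qquad k=1,\dots,m.$$ Let $c=(c_1,\dots,c_m)^T\in\mathbb{R}^m$ satisfy $c_i\ge 0$ for all $i$, and suppose that either $Ac\le c$ or $Bc\le c$ (componentwise inequality). Then the function $\psi_c:S^{m-1}\to\mathbb{R}$, $\psi_c(x)=\sum_{k=1}^m c_kx_k$, is a Lyapunov function for $V$, i.e. for every $x^{(0)}\in S^{m-1}$ the limit $\lim_{n\to\infty}\psi_c(x^{(n)})$ exists, where $x^{(n+1)}=V(x^{(n)})$.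
   Context: $S^{m-1}=\{x\in\mathbb{R}^m: x_i\ge 0,\ \sum_{i=1}^m x_i=1\}$ is the standard simplex. The conditions on $A,B$ ensure that $P_{ij,k}=a_{ik}b_{jk}$ satisfies $P_{ij,k}\ge 0$ and $\sum_k P_{ij,k}=1$, so $V(x)_k=\sum_{i,j}P_{ij,k}x_ix_j$ is a quadratic stochastic operator mapping $S^{m-1}$ to itself (a "separable" quadratic stochastic operator). A continuous function $\phi:S^{m-1}\to\mathbb{R}$ is called a Lyapunov function for $V$ if $\lim_{n\to\infty}\phi(x^{(n)})$ exists for every initial point $x^{(0)}\in S^{m-1}$, where $x^{(n+1)}=V(x^{(n)})$. *)

theory Defs
  imports "HOL-Analysis.Analysis"
begin

text \<open>Standard simplex S^{m-1} in R^m, with m = CARD('n).\<close>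
definition std_simplex :: "(real^'n) set" where
  "std_simplex = {x. (\<forall>i. 0 \<le> x$i) \<and> (\<Sum>i\<in>UNIV. x$i) = 1}"

definition sep_qso :: "real^'n^'n \<Rightarrow> real^'n^'n \<Rightarrow> real^'n \<Rightarrow> real^'n" where
  "sep_qso A B x = (\<chi> k. (\<Sum>i\<in>UNIV. A$i$k * x$i) * (\<Sum>j\<in>UNIV. B$j$k * x$j))"

definition lyapunov_function :: "(real^'n \<Rightarrow> real^'n) \<Rightarrow> (real^'n \<Rightarrow> real) \<Rightarrow> bool" where
  "lyapunov_function V \<phi> \<longleftrightarrow> continuous_on std_simplex \<phi> \<and>
     (\<forall>x0\<in>std_simplex. convergent (\<lambda>n. \<phi> ((V ^^ n) x0)))"

end

theory Submission
  imports Defs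
begin

lemma V_simplex:
  fixes A B :: "real^'n^'n"
  assumes A_range: "\<forall>i j. 0 \<le> A$i$j \<and> A$i$j \<le> 1"
    and B_range: "\<forall>i j. 0 \<le> B$i$j \<and> B$i$j \<le> 1"
    and ABT: "A ** transpose B = (\<chi> i j. 1)"
    and x: "x \<in> std_simplex"
  shows "sep_qso A B x \<in> std_simplex"
proof -
  have x0: "\<And>i. 0 \<le> x$i" and x1: "(\<Sum>i\<in>UNIV. x$i) = 1" using x by (auto simp: std_simplex_def)
  have ab: "\<And>i j. (\<Sum>k\<in>UNIV. A$i$k * B$j$k) = 1"
  proof -
    fix i j
    have "(A ** transpose B)$i$j = 1" using ABT by simp
    thus "(\<Sum>k\<in>UNIV. A$i$k * B$j$k) = 1" by (simp add: matrix_matrix_mult_def transpose_def)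
  qed
  have "(\<Sum>k\<in>UNIV. (\<Sum>i\<in>UNIV. A$i$k * x$i) * (\<Sum>j\<in>UNIV. B$j$k * x$j))
      = (\<Sum>k\<in>UNIV. \<Sum>j\<in>UNIV. \<Sum>i\<in>UNIV. x$i * x$j * (A$i$k * B$j$k))"
    by (simp add: sum_product sum_distrib_left mult_ac)
  also have "\<dots> = (\<Sum>k\<in>UNIV. \<Sum>i\<in>UNIV. \<Sum>j\<in>UNIV. x$i * x$j * (A$i$k * B$j$k))"
    by (rule sum.cong[OF refl], rule sum.swap)
  also have "\<dots> = (\<Sum>i\<in>UNIV. \<Sum>k\<in>UNIV. \<Sum>j\<in>UNIV. x$i * x$j * (A$i$k * B$j$k))"
    by (rule sum.swap)
  also have "\<dots> = (\<Sum>i\<in>UNIV. \<Sum>j\<in>UNIV. \<Sum>k\<in>UNIV. x$i * x$j * (A$i$k * B$j$k))"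
    by (rule sum.cong[OF refl], rule sum.swap)
  also have "\<dots> = (\<Sum>i\<in>UNIV. \<Sum>j\<in>UNIV. x$i * x$j)"
    by (simp add: sum_distrib_left[symmetric] ab)
  also have "\<dots> = 1" using x1 by (simp add: sum_product[symmetric])
  finally have s: "(\<Sum>k\<in>UNIV. (\<Sum>i\<in>UNIV. A$i$k * x$i) * (\<Sum>j\<in>UNIV. B$j$k * x$j)) = 1" .
  have nn: "\<And>k. 0 \<le> (\<Sum>i\<in>UNIV. A$i$k * x$i) * (\<Sum>j\<in>UNIV. B$j$k * x$j)"
    using A_range B_range x0 by (intro mult_nonneg_nonneg sum_nonneg) auto
  show ?thesis using s nn by (simp add: std_simplex_def sep_qso_def)
qed

lemma V_dec:
  fixes A B :: "real^'n^'n" and c :: "real^'n"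
  assumes A_range: "\<forall>i j. 0 \<le> A$i$j \<and> A$i$j \<le> 1"
    and B_range: "\<forall>i j. 0 \<le> B$i$j \<and> B$i$j \<le> 1"
    and c_nonneg: "\<forall>i. 0 \<le> c$i"
    and c_sub: "(\<forall>i. (A *v c)$i \<le> c$i) \<or> (\<forall>i. (B *v c)$i \<le> c$i)"
    and x: "x \<in> std_simplex"
  shows "(\<Sum>k\<in>UNIV. c$k * sep_qso A B x $k) \<le> (\<Sum>k\<in>UNIV. c$k * x$k)"
proof -
  have x0: "\<And>i. 0 \<le> x$i" and x1: "(\<Sum>i\<in>UNIV. x$i) = 1" using x by (auto simp: std_simplex_def)
  have Ale: "\<And>k. (\<Sum>i\<in>UNIV. A$i$k * x$i) \<le> 1"
  proof -
    fix k
    have "(\<Sum>i\<in>UNIV. A$i$k * x$i) \<le> (\<Sum>i\<in>UNIV. x$i)"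
      using A_range x0 by (intro sum_mono) (simp add: mult_left_le_one_le)
    thus "(\<Sum>i\<in>UNIV. A$i$k * x$i) \<le> 1" using x1 by simp
  qed
  have Ble: "\<And>k. (\<Sum>i\<in>UNIV. B$i$k * x$i) \<le> 1"
  proof -
    fix k
    have "(\<Sum>i\<in>UNIV. B$i$k * x$i) \<le> (\<Sum>i\<in>UNIV. x$i)"
      using B_range x0 by (intro sum_mono) (simp add: mult_left_le_one_le)
    thus "(\<Sum>i\<in>UNIV. B$i$k * x$i) \<le> 1" using x1 by simp
  qed
  have Anng: "\<And>k. 0 \<le> (\<Sum>i\<in>UNIV. A$i$k * x$i)" using A_range x0 by (intro sum_nonneg) auto
  have Bnng: "\<And>k. 0 \<le> (\<Sum>i\<in>UNIV. B$i$k * x$i)" using B_range x0 by (intro sum_nonneg) auto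
  from c_sub show ?thesis
  proof
    assume h: "\<forall>i. (A *v c)$i \<le> c$i"
    have "(\<Sum>k\<in>UNIV. c$k * sep_qso A B x $k) \<le> (\<Sum>k\<in>UNIV. c$k * (\<Sum>i\<in>UNIV. A$i$k * x$i))"
      unfolding sep_qso_def using c_nonneg Ble Anng
      by (intro sum_mono) (simp add: mult_left_mono mult_left_le)
    also have "\<dots> = (\<Sum>i\<in>UNIV. x$i * (A *v c)$i)"
    proof -
      have "(\<Sum>k\<in>UNIV. c$k * (\<Sum>i\<in>UNIV. A$i$k * x$i)) = (\<Sum>k\<in>UNIV. \<Sum>i\<in>UNIV. x$i * (A$i$k * c$k))"
        by (simp add: sum_distrib_left mult_ac)
      also have "\<dots> = (\<Sum>i\<in>UNIV. \<Sum>k\<in>UNIV. x$i * (A$i$k * c$k))" by (rule sum.swap)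
      also have "\<dots> = (\<Sum>i\<in>UNIV. x$i * (A *v c)$i)"
        by (simp add: matrix_vector_mult_def sum_distrib_left)
      finally show ?thesis .
    qed
    also have "\<dots> \<le> (\<Sum>i\<in>UNIV. x$i * c$i)"
      using h x0 by (intro sum_mono mult_left_mono) auto
    finally show ?thesis by (simp add: mult.commute)
  next
    assume h: "\<forall>i. (B *v c)$i \<le> c$i"
    have "(\<Sum>k\<in>UNIV. c$k * sep_qso A B x $k) \<le> (\<Sum>k\<in>UNIV. c$k * (\<Sum>i\<in>UNIV. B$i$k * x$i))"
      unfolding sep_qso_def using c_nonneg Ale Bnng Anng
      by (intro sum_mono) (simp add: mult_left_mono mult_left_le_one_le)
    also have "\<dots> = (\<Sum>i\<in>UNIV. x$i * (B *v c)$i)"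
    proof -
      have "(\<Sum>k\<in>UNIV. c$k * (\<Sum>i\<in>UNIV. B$i$k * x$i)) = (\<Sum>k\<in>UNIV. \<Sum>i\<in>UNIV. x$i * (B$i$k * c$k))"
        by (simp add: sum_distrib_left mult_ac)
      also have "\<dots> = (\<Sum>i\<in>UNIV. \<Sum>k\<in>UNIV. x$i * (B$i$k * c$k))" by (rule sum.swap)
      also have "\<dots> = (\<Sum>i\<in>UNIV. x$i * (B *v c)$i)"
        by (simp add: matrix_vector_mult_def sum_distrib_left)
      finally show ?thesis .
    qed
    also have "\<dots> \<le> (\<Sum>i\<in>UNIV. x$i * c$i)"
      using h x0 by (intro sum_mono mult_left_mono) auto
    finally show ?thesis by (simp add: mult.commute)
  qed
qed

theorem theorem3p1:
  fixes A B :: "real^'n^'n" and c :: "real^'n"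
  assumes m2: "CARD('n) \<ge> 2"
    and A_range: "\<forall>i j. 0 \<le> A$i$j \<and> A$i$j \<le> 1"
    and B_range: "\<forall>i j. 0 \<le> B$i$j \<and> B$i$j \<le> 1"
    and detA: "det A = 0" and detB: "det B = 0"
    and ABT: "A ** transpose B = (\<chi> i j. 1)"
    and A_rows: "\<exists>i j. A$i \<noteq> A$j"
    and B_rows: "\<exists>i j. B$i \<noteq> B$j"
    and c_nonneg: "\<forall>i. 0 \<le> c$i"
    and c_sub: "(\<forall>i. (A *v c)$i \<le> c$i) \<or> (\<forall>i. (B *v c)$i \<le> c$i)"
  shows "lyapunov_function (sep_qso A B) (\<lambda>x. \<Sum>k\<in>UNIV. c$k * x$k)"
  unfolding lyapunov_function_def
proof (intro conjI ballI)
  show "continuous_on std_simplex (\<lambda>x. \<Sum>k\<in>UNIV. c$k * x$k)"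
    by (intro continuous_intros)
next
  fix x0 :: "real^'n" assume x0: "x0 \<in> std_simplex"
  define u where "u n = (sep_qso A B ^^ n) x0" for n
  have us: "u n \<in> std_simplex" for n
    by (induction n) (auto simp: u_def x0 intro!: V_simplex[OF A_range B_range ABT])
  let ?f = "\<lambda>n. \<Sum>k\<in>UNIV. c$k * u n$k"
  have dec: "decseq ?f"
    unfolding decseq_Suc_iff
    using V_dec[OF A_range B_range c_nonneg c_sub us] by (simp add: u_def)
  have lb: "0 \<le> ?f n" for n
    using us[of n] c_nonneg by (intro sum_nonneg) (auto simp: std_simplex_def)
  have "convergent ?f"
    using decseq_convergent[OF dec, of 0] lb unfolding convergent_def by blast
  then show "convergent (\<lambda>n. \<Sum>k\<in>UNIV. c$k * (sep_qso A B ^^ n) x0 $k)" by (simp add: u_def)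
qed

end
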